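(* For every even $m\ge 2$ and every $n\ge 2$, the $m$th order $n$-dimensional Pascal tensor is positive definite.
   Context: The $m$th order $n$-dimensional Pascal tensor is $\mathcal{P}=(p_{i_1\dots i_m})$ with $p_{i_1\dots i_m}=\frac{(i_1+\dots+i_m-m)!}{(i_1-1)!\cdots(i_m-1)!}$ for $i_1,\dots,i_m\in\{1,\dots,n\}$ (for $m=2$ this is the symmetric Pascal matrix). For $m$ even, a symmetric tensor $\mathcal{A}$ is positive definite if $\mathcal{A}\mathbf{x}^m=\sum_{i_1,\dots,i_m}a_{i_1\dots i_m}x_{i_1}\cdots x_{i_m}>0$ for all nonzero $\mathbf{x}\in\mathbb{R}^n$. *)

theory Defs
  imports "HOL-Analysis.Analysis" "HOL-Library.FuncSet"
begin

text \<open>Indices are shifted to be 0-based: an index tuple (i_1,...,i_m) with i_k in {1..n}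
  is represented by a function idx on {0..<m} with idx k = i_(k+1) - 1 in {0..<n}.
  Then p_{i_1...i_m} = (i_1+...+i_m-m)! / ((i_1-1)!...(i_m-1)!)
  = (sum of idx)! / prod of (idx k)!.\<close>

definition pascal_tensor :: "nat \<Rightarrow> (nat \<Rightarrow> nat) \<Rightarrow> real" where
  "pascal_tensor m idx = fact (\<Sum>k<m. idx k) / (\<Prod>k<m. fact (idx k))"

definition tensor_form :: "nat \<Rightarrow> nat \<Rightarrow> ((nat \<Rightarrow> nat) \<Rightarrow> real) \<Rightarrow> (nat \<Rightarrow> real) \<Rightarrow> real" where
  "tensor_form m n A x = (\<Sum>idx \<in> {..<m} \<rightarrow>\<^sub>E {..<n}. A idx * (\<Prod>k<m. x (idx k)))"

definition positive_definite_tensor :: "nat \<Rightarrow> nat \<Rightarrow> ((nat \<Rightarrow> nat) \<Rightarrow> real) \<Rightarrow> bool" where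
  "positive_definite_tensor m n A \<longleftrightarrow>
     (\<forall>x::nat \<Rightarrow> real. (\<exists>i<n. x i \<noteq> 0) \<longrightarrow> tensor_form m n A x > 0)"

end

theory Submission
  imports Defs
begin

lemma sum_lessThan_split: "(\<Sum>k<a+b. g k) = (\<Sum>k<a. g k) + (\<Sum>k<b. g (a+k))"
  for g :: "nat \<Rightarrow> 'a::comm_monoid_add"
  by (induction b) (simp_all add: add.assoc)

lemma prod_lessThan_split: "(\<Prod>k<a+b. g k) = (\<Prod>k<a. g k) * (\<Prod>k<b. g (a+k))"
  for g :: "nat \<Rightarrow> 'a::comm_monoid_mult"
  by (induction b) (simp_all add: mult.assoc)

lemma vand_sq: "(U + V) choose V = (\<Sum>k\<le>V. (U choose k) * (V choose k))"
proof -
  have "(U + V) choose V = (\<Sum>k\<le>V. (U choose k) * (V choose (V - k)))"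
    using vandermonde[of U V V] by simp
  also have "\<dots> = (\<Sum>k\<le>V. (U choose k) * (V choose k))"
    by (intro sum.cong refl) (simp add: binomial_symmetric[symmetric])
  finally show ?thesis .
qed

lemma fact_add_sum:
  assumes "V \<le> N"
  shows "(fact (U + V) :: real) = fact U * fact V * (\<Sum>k\<le>N. real (U choose k) * real (V choose k))"
proof -
  have "(\<Sum>k\<le>N. real (U choose k) * real (V choose k)) = (\<Sum>k\<le>V. real (U choose k) * real (V choose k))"
    using assms by (intro sum.mono_neutral_right) auto
  also have "\<dots> = real ((U + V) choose V)" by (simp add: vand_sq)
  finally have e: "(\<Sum>k\<le>N. real (U choose k) * real (V choose k)) = real ((U + V) choose V)" .
  have "fact V * fact (U + V - V) * ((U+V) choose V) = (fact (U+V) :: nat)"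
    by (rule binomial_fact_lemma) simp
  hence "fact V * fact U * real ((U+V) choose V) = (fact (U+V) :: real)"
    by (metis add_diff_cancel_right' of_nat_fact of_nat_mult)
  thus ?thesis using e by (simp add: mult_ac)
qed

theorem theorem2p3:
  fixes m n :: nat
  assumes "even m" and "m \<ge> 2" and "n \<ge> 2"
  shows "positive_definite_tensor m n (pascal_tensor m)"
  unfolding positive_definite_tensor_def
proof (intro allI impI)
  fix x :: "nat \<Rightarrow> real"
  assume ex: "\<exists>i<n. x i \<noteq> 0"
  obtain r where m: "m = r + r" using assms(1) by (metis evenE mult_2)
  define y where "y i = x i / fact i" for i
  define A where "A = {..<r} \<rightarrow>\<^sub>E {..<n}"
  define B where "B = {..<m} \<rightarrow>\<^sub>E {..<n}"
  define N where "N = m * n"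
  define Y where "Y u = (\<Prod>k<r. y (u k))" for u :: "nat \<Rightarrow> nat"
  define S where "S u = (\<Sum>k<r. u k)" for u :: "nat \<Rightarrow> nat"
  define G where "G j = (\<Sum>u\<in>A. fact (S u) * real (S u choose j) * Y u)" for j
  define comb where "comb = (\<lambda>(u::nat\<Rightarrow>nat, v::nat\<Rightarrow>nat) k. if k < r then u k else if k < m then v (k - r) else undefined)"
  have finA: "finite A" unfolding A_def by (simp add: finite_PiE)
  have SN: "S u \<le> N" if "u \<in> A" for u
  proof -
    have "S u \<le> (\<Sum>k<r. n)" unfolding S_def
      using that unfolding A_def by (intro sum_mono) (auto simp: PiE_iff less_imp_le)
    also have "\<dots> \<le> N" unfolding N_def m by simp
    finally show ?thesis .
  qed
  have step1: "tensor_form m n (pascal_tensor m) x = (\<Sum>idx\<in>B. fact (\<Sum>k<m. idx k) * (\<Prod>k<m. y (idx k)))"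
    unfolding tensor_form_def B_def pascal_tensor_def y_def
    by (intro sum.cong refl) (simp add: prod_dividef)
  have step2: "(\<Sum>p\<in>A \<times> A. fact (S (fst p) + S (snd p)) * (Y (fst p) * Y (snd p)))
      = (\<Sum>idx\<in>B. fact (\<Sum>k<m. idx k) * (\<Prod>k<m. y (idx k)))"
  proof (rule sum.reindex_bij_witness[where j = comb and i = "\<lambda>idx. (restrict idx {..<r}, restrict (\<lambda>k. idx (r + k)) {..<r})"])
    fix p assume "p \<in> A \<times> A"
    then obtain u v where p: "p = (u, v)" "u \<in> A" "v \<in> A" by auto
    show "(restrict (comb p) {..<r}, restrict (\<lambda>k. comb p (r + k)) {..<r}) = p"
      using p unfolding comb_def A_def m by (auto simp: PiE_iff fun_eq_iff extensional_def)
    show "comb p \<in> B"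
      using p unfolding comb_def A_def B_def m by (auto simp: PiE_iff extensional_def)
    have s: "(\<Sum>k<m. comb p k) = S u + S v" unfolding m
      by (subst sum_lessThan_split) (simp add: comb_def p S_def m)
    have q: "(\<Prod>k<m. y (comb p k)) = Y u * Y v" unfolding m
      by (subst prod_lessThan_split) (simp add: comb_def p Y_def m)
    show "fact (\<Sum>k<m. comb p k) * (\<Prod>k<m. y (comb p k)) = fact (S (fst p) + S (snd p)) * (Y (fst p) * Y (snd p))"
      using s q p by simp
  next
    fix idx assume "idx \<in> B"
    then show "comb (restrict idx {..<r}, restrict (\<lambda>k. idx (r + k)) {..<r}) = idx"
      unfolding comb_def B_def m by (auto simp: PiE_iff fun_eq_iff extensional_def)
    show "(restrict idx {..<r}, restrict (\<lambda>k. idx (r + k)) {..<r}) \<in> A \<times> A"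
      using \<open>idx \<in> B\<close> unfolding A_def B_def m by (auto simp: PiE_iff)
  qed
  have step3: "(\<Sum>p\<in>A \<times> A. fact (S (fst p) + S (snd p)) * (Y (fst p) * Y (snd p))) = (\<Sum>j\<le>N. (G j)^2)"
  proof -
    have "(\<Sum>p\<in>A \<times> A. fact (S (fst p) + S (snd p)) * (Y (fst p) * Y (snd p)))
        = (\<Sum>u\<in>A. \<Sum>v\<in>A. fact (S u + S v) * (Y u * Y v))"
      by (simp add: sum.cartesian_product case_prod_beta)
    also have "\<dots> = (\<Sum>u\<in>A. \<Sum>v\<in>A. \<Sum>j\<le>N. (fact (S u) * real (S u choose j) * Y u) * (fact (S v) * real (S v choose j) * Y v))"
      by (intro sum.cong refl) (simp add: fact_add_sum[OF SN] sum_distrib_left sum_distrib_right mult_ac)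
    also have "\<dots> = (\<Sum>j\<le>N. \<Sum>u\<in>A. \<Sum>v\<in>A. (fact (S u) * real (S u choose j) * Y u) * (fact (S v) * real (S v choose j) * Y v))"
      by (simp add: sum.swap[of _ _ "{..N}"])
    also have "\<dots> = (\<Sum>j\<le>N. (G j)^2)"
      unfolding G_def power2_eq_square sum_product by simp
    finally show ?thesis .
  qed
  define J where "J = Max {i. i < n \<and> y i \<noteq> 0}"
  have yne: "y i \<noteq> 0 \<longleftrightarrow> x i \<noteq> 0" for i by (simp add: y_def)
  have nonempty: "{i. i < n \<and> y i \<noteq> 0} \<noteq> {}" using ex yne by auto
  have finJ: "finite {i. i < n \<and> y i \<noteq> 0}" by simp
  have J: "J < n" "y J \<noteq> 0" using Max_in[OF finJ nonempty] unfolding J_def by auto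
  have Jmax: "i \<le> J" if "i < n" "y i \<noteq> 0" for i
    unfolding J_def using that by (intro Max_ge[OF finJ]) auto
  define K where "K = r * J"
  define u0 where "u0 = restrict (\<lambda>_. J) {..<r}"
  have u0A: "u0 \<in> A" unfolding u0_def A_def using J by auto
  have KN: "K \<le> N" unfolding K_def N_def m using J by (simp add: mult_le_mono less_imp_le)
  have GK: "G K = fact K * (y J)^r"
  proof -
    have "G K = fact (S u0) * real (S u0 choose K) * Y u0 + (\<Sum>u\<in>A - {u0}. fact (S u) * real (S u choose K) * Y u)"
      unfolding G_def using finA u0A by (simp add: sum.remove)
    also have "(\<Sum>u\<in>A - {u0}. fact (S u) * real (S u choose K) * Y u) = 0"
    proof (intro sum.neutral ballI)
      fix u assume u: "u \<in> A - {u0}"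
      show "fact (S u) * real (S u choose K) * Y u = 0"
      proof (cases "Y u = 0")
        case False
        hence yu: "y (u k) \<noteq> 0" if "k < r" for k using that unfolding Y_def by auto
        have le: "u k \<le> J" if "k < r" for k
          using Jmax[OF _ yu[OF that]] u that unfolding A_def by (auto simp: PiE_iff)
        obtain k where k: "k < r" "u k \<noteq> J"
          using u unfolding A_def u0_def by (auto simp: PiE_iff fun_eq_iff extensional_def split: if_splits)
        have "S u < (\<Sum>k<r. J)" unfolding S_def
          by (rule sum_strict_mono_ex1) (use le k in \<open>auto intro: le_neq_implies_less\<close>)
        hence "S u < K" by (simp add: K_def)
        thus ?thesis by simp
      qed simp
    qed
    also have "S u0 = K" unfolding S_def u0_def K_def by simp
    also have "Y u0 = (y J)^r" unfolding Y_def u0_def by simp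
    finally show ?thesis by simp
  qed
  have "0 < (G K)^2" using GK J by simp
  also have "\<dots> \<le> (\<Sum>j\<le>N. (G j)^2)"
    by (rule member_le_sum) (use KN in auto)
  finally show "0 < tensor_form m n (pascal_tensor m) x"
    using step1 step2 step3 by simp
qed

end
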